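(* Let $(\alpha_n)_{n\in\mathbb{N}^+}$ be a sequence in $(0,1)$ converging to $\alpha\in(0,1)$, with continued fraction expansions $\alpha_n=[0;a_{n1},a_{n2},\dots]$ and $\alpha=[0;a_1,a_2,\dots]$, and write $\alpha_n=[0;a_{n1},\dots,a_{ni},r_{ni}]$, $\alpha=[0;a_1,\dots,a_i,r_i]$. Suppose that for some $i\in\mathbb{N}^+$ the numbers $a_{n1},\dots,a_{ni}$ ($n\in\mathbb{N}^+$) are bounded, and that there are numbers $R_{i,\min},R_{i,\max}$ with $1<R_{i,\min}\le r_{ni}\le R_{i,\max}<\infty$ for all $n$. Then there is $n_0\in\mathbb{N}^+$ such that for each $1\le j\le i$, $a_{nj}$ is independent of $n$ for $n>n_0$, and $a_j=\lim_{\nu\to\infty}a_{\nu j}$; in particular $a_j=a_{nj}$ for all sufficiently large $n$.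
   Context: Continued fraction conventions: $[a_0;a_1,\dots,a_n]$ denotes $a_0+1/(a_1+1/(a_2+\cdots+1/a_n))$ with $a_0\in\mathbb{Z}$, $a_k\in\mathbb{N}^+$ for $1\le k<n$, and (for uniqueness) last element $a_n>1$. Every real number is identified with its unique continued fraction; a terminating expansion $[a_0;a_1,\dots,a_n]$ is also written as the nonterminating form $[a_0;a_1,\dots,a_n,0,0,\dots]$ (i.e. $a_i=0$ for $i>n$), with $[a_0;0,0,\dots]=a_0$. For $\alpha=[a_0;a_1,a_2,\dots]$ and $i\ge1$, the truncated form is $\alpha=[a_0;a_1,\dots,a_i,r_i]$ where $r_i:=a_{i+1}+[0;a_{i+2},a_{i+3},\dots]$. *)

theory Defs
  imports Complex_Main
begin

text \<open>For alpha = [a0; a1, a2, ...] one has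
  cf_rem alpha (i+1) = r_i = a_(i+1) + [0; a_(i+2), ...] (and 0 after termination).\<close>
fun cf_rem :: "real \<Rightarrow> nat \<Rightarrow> real" where
  "cf_rem x 0 = x"
| "cf_rem x (Suc k) = (if frac (cf_rem x k) = 0 then 0 else 1 / frac (cf_rem x k))"

text \<open>Partial quotients a_k = floor of the k-th complete quotient; a_k = 0 for k
  beyond the end of a terminating expansion (whose last element is > 1).\<close>
definition cf_digit :: "real \<Rightarrow> nat \<Rightarrow> int" where
  "cf_digit x k = \<lfloor>cf_rem x k\<rfloor>"

end

theory Submission
  imports Defs
begin

lemma floor_eventually:
  fixes X :: "nat \<Rightarrow> real"
  assumes X: "X \<longlonglongrightarrow> L" and lo: "0 < lo" and hi: "hi < 1"
    and ev: "eventually (\<lambda>n. lo \<le> frac (X n) \<and> frac (X n) \<le> hi) sequentially"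
  shows "eventually (\<lambda>n. floor (X n) = floor L) sequentially"
proof -
  define d where "d = min lo (1 - hi)"
  have d: "d > 0" using lo hi by (simp add: d_def)
  have "eventually (\<lambda>n. dist (X n) L < d) sequentially" using tendstoD[OF X d] .
  with ev show ?thesis
  proof (rule eventually_elim2)
    fix n assume a: "lo \<le> frac (X n) \<and> frac (X n) \<le> hi" and b: "dist (X n) L < d"
    have A: "real_of_int \<lfloor>X n\<rfloor> + frac (X n) = X n" by (simp add: frac_def)
    have B1: "real_of_int \<lfloor>L\<rfloor> \<le> L" by simp
    have B2: "L < real_of_int \<lfloor>L\<rfloor> + 1" by linarith
    have D: "\<bar>X n - L\<bar> < d" using b by (simp add: dist_real_def)
    have d1: "d \<le> lo" "d \<le> 1 - hi" by (auto simp: d_def)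
    have c1: "\<not> \<lfloor>X n\<rfloor> \<ge> \<lfloor>L\<rfloor> + 1"
    proof
      assume "\<lfloor>X n\<rfloor> \<ge> \<lfloor>L\<rfloor> + 1"
      hence "real_of_int \<lfloor>X n\<rfloor> \<ge> real_of_int \<lfloor>L\<rfloor> + 1" by linarith
      thus False using A B2 D d1 a by linarith
    qed
    have c2: "\<not> \<lfloor>X n\<rfloor> \<le> \<lfloor>L\<rfloor> - 1"
    proof
      assume "\<lfloor>X n\<rfloor> \<le> \<lfloor>L\<rfloor> - 1"
      hence "real_of_int \<lfloor>X n\<rfloor> \<le> real_of_int \<lfloor>L\<rfloor> - 1" by linarith
      thus False using A B1 D d1 a by linarith
    qed
    show "\<lfloor>X n\<rfloor> = \<lfloor>L\<rfloor>" using c1 c2 by linarith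
  qed
qed

theorem lemma1:
  fixes \<alpha>s :: "nat \<Rightarrow> real" and \<alpha> :: real and i :: nat
    and Rmin Rmax :: real
  assumes seq_in: "\<forall>n\<ge>1. 0 < \<alpha>s n \<and> \<alpha>s n < 1"
    and lim: "\<alpha>s \<longlonglongrightarrow> \<alpha>"
    and alpha_in: "0 < \<alpha>" "\<alpha> < 1"
    and i_pos: "i \<ge> 1"
    and bdd: "\<exists>B. \<forall>n\<ge>1. \<forall>j\<in>{1..i}. cf_digit (\<alpha>s n) j \<le> B"
    and Rmin_gt: "1 < Rmin"
    and r_bounds: "\<forall>n\<ge>1. Rmin \<le> cf_rem (\<alpha>s n) (i + 1) \<and> cf_rem (\<alpha>s n) (i + 1) \<le> Rmax"
  shows "\<exists>n0\<ge>1. \<forall>j\<in>{1..i}.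
           (\<exists>c. \<forall>n>n0. cf_digit (\<alpha>s n) j = c)
         \<and> (\<lambda>\<nu>. real_of_int (cf_digit (\<alpha>s \<nu>) j)) \<longlonglongrightarrow> real_of_int (cf_digit \<alpha> j)
         \<and> (\<forall>n>n0. cf_digit \<alpha> j = cf_digit (\<alpha>s n) j)"
proof -
  obtain B0 where B0: "\<forall>n\<ge>1. \<forall>j\<in>{1..i}. cf_digit (\<alpha>s n) j \<le> B0" using bdd by blast
  define B where "B = max B0 1"
  have Bge: "B \<ge> 1" by (simp add: B_def)
  have Bb: "\<forall>n\<ge>1. \<forall>j\<in>{1..i}. cf_digit (\<alpha>s n) j \<le> B" using B0 by (force simp: B_def)
  have RR: "Rmin \<le> Rmax" using r_bounds by force
  have fb: "\<forall>k\<le>i. \<exists>lo hi. 0 < lo \<and> hi < 1 \<and> (\<forall>n\<ge>1. lo \<le> frac (cf_rem (\<alpha>s n) (i-k)) \<and> frac (cf_rem (\<alpha>s n) (i-k)) \<le> hi)"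
  proof (intro allI impI)
    fix k assume "k \<le> i"
    thus "\<exists>lo hi. 0 < lo \<and> hi < 1 \<and> (\<forall>n\<ge>1. lo \<le> frac (cf_rem (\<alpha>s n) (i-k)) \<and> frac (cf_rem (\<alpha>s n) (i-k)) \<le> hi)"
    proof (induction k)
      case 0
      show ?case
      proof (intro exI conjI allI impI)
        show "0 < 1 / Rmax" using RR Rmin_gt by simp
        show "1 / Rmin < 1" using Rmin_gt by simp
        fix n :: nat assume n: "n \<ge> 1"
        define f where "f = frac (cf_rem (\<alpha>s n) i)"
        have r: "Rmin \<le> cf_rem (\<alpha>s n) (Suc i)" "cf_rem (\<alpha>s n) (Suc i) \<le> Rmax" using r_bounds n by auto
        have fnz: "f \<noteq> 0" using r Rmin_gt by (auto simp: f_def)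
        hence req: "cf_rem (\<alpha>s n) (Suc i) = 1 / f" by (simp add: f_def)
        have fpos: "f > 0" using fnz frac_ge_0[of "cf_rem (\<alpha>s n) i"] by (simp add: f_def)
        have "1/Rmax \<le> 1 / (1/f)" using r req Rmin_gt fpos by (intro divide_left_mono) auto
        thus "1 / Rmax \<le> frac (cf_rem (\<alpha>s n) (i - 0))" by (simp add: f_def)
        have "1 / (1/f) \<le> 1/Rmin" using r req Rmin_gt fpos by (intro divide_left_mono) auto
        thus "frac (cf_rem (\<alpha>s n) (i - 0)) \<le> 1 / Rmin" by (simp add: f_def)
      qed
    next
      case (Suc k)
      then obtain lo hi where lh: "0 < lo" "hi < 1"
        "\<forall>n\<ge>1. lo \<le> frac (cf_rem (\<alpha>s n) (i-k)) \<and> frac (cf_rem (\<alpha>s n) (i-k)) \<le> hi" by auto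
      define j where "j = i - Suc k"
      have ij: "i - k = Suc j" using Suc.prems by (simp add: j_def)
      have jin: "Suc j \<in> {1..i}" using Suc.prems by (simp add: j_def)
      show ?case
      proof (intro exI conjI allI impI)
        have "lo \<le> hi" using lh(3) by force
        thus "0 < 1 / (real_of_int B + hi)" using Bge lh by simp
        show "1 / (1 + lo) < 1" using lh by simp
        fix n :: nat assume n: "n \<ge> 1"
        define y where "y = cf_rem (\<alpha>s n) (Suc j)"
        define f where "f = frac (cf_rem (\<alpha>s n) j)"
        have fy: "lo \<le> frac y" "frac y \<le> hi" using lh(3) n ij by (auto simp: y_def)
        have fnz: "f \<noteq> 0"
        proof
          assume "f = 0" hence "y = 0" by (simp add: y_def f_def)
          thus False using fy lh by simp
        qed
        hence yeq: "y = 1 / f" by (simp add: y_def f_def)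
        have fpos: "f > 0" using fnz frac_ge_0[of "cf_rem (\<alpha>s n) j"] by (simp add: f_def)
        have flt: "f < 1" using frac_lt_1 by (simp add: f_def)
        have y1: "y > 1" using yeq fpos flt by simp
        have fl1: "\<lfloor>y\<rfloor> \<ge> 1" using y1 by linarith
        have flB: "\<lfloor>y\<rfloor> \<le> B" using Bb n jin unfolding y_def cf_digit_def by blast
        have yd: "y = real_of_int \<lfloor>y\<rfloor> + frac y" by (simp add: frac_def)
        have ylo: "1 + lo \<le> y" using yd fl1 fy by linarith
        have flBr: "real_of_int \<lfloor>y\<rfloor> \<le> real_of_int B" using flB by linarith
        have yhi: "y \<le> real_of_int B + hi" using yd flBr fy by linarith
        have feq: "f = 1 / y" using yeq fpos by simp
        have "1 / (real_of_int B + hi) \<le> 1 / y" using yhi y1 by (intro divide_left_mono) auto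
        thus "1 / (real_of_int B + hi) \<le> frac (cf_rem (\<alpha>s n) (i - Suc k))"
          using feq by (simp add: f_def j_def)
        have "1 / y \<le> 1 / (1 + lo)" using ylo lh by (intro divide_left_mono) auto
        thus "frac (cf_rem (\<alpha>s n) (i - Suc k)) \<le> 1 / (1 + lo)"
          using feq by (simp add: f_def j_def)
      qed
    qed
  qed
  have fbj: "\<exists>lo hi. 0 < lo \<and> hi < 1 \<and> (\<forall>n\<ge>1. lo \<le> frac (cf_rem (\<alpha>s n) j) \<and> frac (cf_rem (\<alpha>s n) j) \<le> hi)"
    if "j \<le> i" for j
    using fb[rule_format, of "i - j"] that by simp
  have fl: "eventually (\<lambda>n. floor (cf_rem (\<alpha>s n) j) = floor (cf_rem \<alpha> j)) sequentially"
    if jle: "j \<le> i" and jt: "(\<lambda>n. cf_rem (\<alpha>s n) j) \<longlonglongrightarrow> cf_rem \<alpha> j" for j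
  proof -
    obtain lo hi where lh: "0 < lo" "hi < 1"
      "\<forall>n\<ge>1. lo \<le> frac (cf_rem (\<alpha>s n) j) \<and> frac (cf_rem (\<alpha>s n) j) \<le> hi" using fbj[OF jle] by auto
    have "eventually (\<lambda>n. lo \<le> frac (cf_rem (\<alpha>s n) j) \<and> frac (cf_rem (\<alpha>s n) j) \<le> hi) sequentially"
      unfolding eventually_sequentially using lh(3) by (intro exI[of _ 1]) auto
    thus ?thesis using floor_eventually[OF jt lh(1,2)] by blast
  qed
  have conv: "\<forall>j\<le>i. (\<lambda>n. cf_rem (\<alpha>s n) j) \<longlonglongrightarrow> cf_rem \<alpha> j"
  proof (intro allI impI)
    fix j assume "j \<le> i"
    thus "(\<lambda>n. cf_rem (\<alpha>s n) j) \<longlonglongrightarrow> cf_rem \<alpha> j"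
    proof (induction j)
      case 0
      then show ?case using lim by simp
    next
      case (Suc j)
      hence ji: "j \<le> i" by simp
      have IH: "(\<lambda>n. cf_rem (\<alpha>s n) j) \<longlonglongrightarrow> cf_rem \<alpha> j" using Suc ji by simp
      obtain lo hi where lh: "0 < lo" "hi < 1"
        "\<forall>n\<ge>1. lo \<le> frac (cf_rem (\<alpha>s n) j) \<and> frac (cf_rem (\<alpha>s n) j) \<le> hi" using fbj[OF ji] by auto
      have ev: "eventually (\<lambda>n. floor (cf_rem (\<alpha>s n) j) = floor (cf_rem \<alpha> j)) sequentially"
        using fl[OF ji IH] .
      have "(\<lambda>n. cf_rem (\<alpha>s n) j - real_of_int (floor (cf_rem \<alpha> j))) \<longlonglongrightarrow> cf_rem \<alpha> j - real_of_int (floor (cf_rem \<alpha> j))"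
        using IH by (intro tendsto_intros)
      hence ft: "(\<lambda>n. frac (cf_rem (\<alpha>s n) j)) \<longlonglongrightarrow> frac (cf_rem \<alpha> j)"
        unfolding frac_def
        by (rule Lim_transform_eventually) (use ev in \<open>auto elim: eventually_mono\<close>)
      have evlo: "eventually (\<lambda>n. lo \<le> frac (cf_rem (\<alpha>s n) j)) sequentially"
        unfolding eventually_sequentially using lh(3) by (intro exI[of _ 1]) auto
      have Llo: "lo \<le> frac (cf_rem \<alpha> j)"
        using tendsto_lowerbound[OF ft evlo] by simp
      hence Lnz: "frac (cf_rem \<alpha> j) \<noteq> 0" using lh(1) by linarith
      have "(\<lambda>n. 1 / frac (cf_rem (\<alpha>s n) j)) \<longlonglongrightarrow> 1 / frac (cf_rem \<alpha> j)"
        using ft Lnz by (intro tendsto_intros) auto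
      moreover have "eventually (\<lambda>n. 1 / frac (cf_rem (\<alpha>s n) j) = cf_rem (\<alpha>s n) (Suc j)) sequentially"
        using evlo lh(1) by (auto elim!: eventually_mono)
      ultimately have "(\<lambda>n. cf_rem (\<alpha>s n) (Suc j)) \<longlonglongrightarrow> 1 / frac (cf_rem \<alpha> j)"
        by (rule Lim_transform_eventually)
      thus ?case using Lnz by simp
    qed
  qed
  have "\<forall>j\<in>{1..i}. eventually (\<lambda>n. cf_digit (\<alpha>s n) j = cf_digit \<alpha> j) sequentially"
    using fl conv unfolding cf_digit_def by auto
  hence "eventually (\<lambda>n. \<forall>j\<in>{1..i}. cf_digit (\<alpha>s n) j = cf_digit \<alpha> j) sequentially"
    by (simp add: eventually_ball_finite)
  then obtain N where N: "\<And>n. n \<ge> N \<Longrightarrow> \<forall>j\<in>{1..i}. cf_digit (\<alpha>s n) j = cf_digit \<alpha> j"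
    unfolding eventually_sequentially by blast
  show ?thesis
  proof (intro exI[of _ "Suc N"] conjI ballI)
    show "Suc N \<ge> 1" by simp
    fix j assume j: "j \<in> {1..i}"
    show "\<exists>c. \<forall>n>Suc N. cf_digit (\<alpha>s n) j = c" using N j by force
    show "\<forall>n>Suc N. cf_digit \<alpha> j = cf_digit (\<alpha>s n) j" using N j by force
    have "eventually (\<lambda>\<nu>. real_of_int (cf_digit (\<alpha>s \<nu>) j) = real_of_int (cf_digit \<alpha> j)) sequentially"
      using N j unfolding eventually_sequentially by force
    thus "(\<lambda>\<nu>. real_of_int (cf_digit (\<alpha>s \<nu>) j)) \<longlonglongrightarrow> real_of_int (cf_digit \<alpha> j)"
      by (rule tendsto_eventually)
  qed
qed

end
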